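(* Let $N\geq 2$ be an integer. For real $\theta$ and $\varepsilon\geq 0$ let $$G_\theta(\varepsilon)=(1+\theta)^N+\big(1-\theta(1+\varepsilon)\big)^N-2,$$ and define the critical uncertainty bound $\varepsilon_c(\theta)=\inf\{\varepsilon>0: G_\theta(\varepsilon)\leq 0\}$, with the convention $\inf\emptyset=+\infty$. Then for every $\theta>0$, $$\varepsilon_c(\theta)=\begin{cases}+\infty, & N\text{ even and }\theta>2^{1/N}-1,\\[3pt] \dfrac{1-\big(2-(1+\theta)^N\big)^{1/N}}{\theta}-1, & \text{otherwise.}\end{cases}$$
   Context: Root convention: for real $X>0$ and positive integer $N$, $X^{1/N}$ denotes the unique positive real $N$-th root; for $X<0$ and $N$ odd, $X^{1/N}=-|X|^{1/N}$; for $X=0$, $X^{1/N}=0$. (The case $X<0$ with $N$ even does not arise in the formula.) *)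

theory Defs
  imports Complex_Main "HOL-Library.Extended_Real"
begin

definition G :: "nat \<Rightarrow> real \<Rightarrow> real \<Rightarrow> real" where
  "G N \<theta> \<epsilon> = (1 + \<theta>) ^ N + (1 - \<theta> * (1 + \<epsilon>)) ^ N - 2"

text \<open>Critical uncertainty bound: infimum in the extended reals, so Inf of the empty set is +infinity.\<close>
definition eps_c :: "nat \<Rightarrow> real \<Rightarrow> ereal" where
  "eps_c N \<theta> = Inf (ereal ` {\<epsilon>. \<epsilon> > 0 \<and> G N \<theta> \<epsilon> \<le> 0})"

end

theory Submission
  imports Defs
begin

lemma binom_gt2:
  fixes N :: nat and t :: real
  assumes "N \<ge> 2" and "t > 0"
  shows "(1 + t) ^ N + (1 - t) ^ N > 2"
proof -
  have e1: "(1 + t) ^ N = (\<Sum>k\<le>N. real (N choose k) * t ^ k)"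
    using binomial_ring[of t 1 N] by (simp add: add.commute mult.commute)
  have e2: "(1 - t) ^ N = (\<Sum>k\<le>N. real (N choose k) * (-t) ^ k)"
    using binomial_ring[of "-t" 1 N] by (simp add: add.commute mult.commute)
  define f where "f k = real (N choose k) * (t ^ k + (-t) ^ k)" for k
  have sum: "(1 + t) ^ N + (1 - t) ^ N = (\<Sum>k\<le>N. f k)"
    unfolding e1 e2 f_def by (simp add: sum.distrib[symmetric] algebra_simps)
  have nn: "f k \<ge> 0" for k
  proof (cases "even k")
    case True then show ?thesis using assms by (simp add: f_def)
  next
    case False then show ?thesis by (simp add: f_def)
  qed
  have sub: "{0, 2} \<subseteq> {..N}" using assms by auto
  have "(\<Sum>k\<in>{0,2}. f k) \<le> (\<Sum>k\<le>N. f k)"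
    by (rule sum_mono2) (use sub nn in auto)
  moreover have "(\<Sum>k\<in>{0,2::nat}. f k) = 2 + real (N choose 2) * (2 * t^2)"
    by (simp add: f_def)
  moreover have "real (N choose 2) > 0" using assms by simp
  moreover have "t^2 > 0" using assms by simp
  ultimately show ?thesis unfolding sum
    by (smt (verit) mult_pos_pos)
qed

theorem lemma1:
  fixes N :: nat and \<theta> :: real
  assumes "N \<ge> 2" and "\<theta> > 0"
  shows "eps_c N \<theta> =
    (if even N \<and> \<theta> > root N 2 - 1 then \<infinity>
     else ereal ((1 - root N (2 - (1 + \<theta>) ^ N)) / \<theta> - 1))"
proof -
  define c where "c = 2 - (1 + \<theta>) ^ N"
  define r where "r = root N c"
  define e0 where "e0 = (1 - r) / \<theta> - 1"
  define S where "S = {\<epsilon>. \<epsilon> > 0 \<and> G N \<theta> \<epsilon> \<le> 0}"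
  have N0: "N > 0" using assms by simp
  have eqS: "\<epsilon> \<in> S \<longleftrightarrow> 1 - \<theta> * (1 + \<epsilon>) < 1 - \<theta> \<and> (1 - \<theta> * (1 + \<epsilon>)) ^ N \<le> c" for \<epsilon>
    using assms(2) by (auto simp: S_def G_def c_def algebra_simps zero_less_mult_iff)
  have u0: "1 - \<theta> * (1 + e0) = r" using assms(2) by (simp add: e0_def field_simps)
  have ge: "\<epsilon> \<ge> e0" if "1 - \<theta> * (1 + \<epsilon>) \<le> r" for \<epsilon>
  proof -
    have "\<theta> * (1 + e0) \<le> \<theta> * (1 + \<epsilon>)" using that u0 by linarith
    then show ?thesis using assms(2) by simp
  qed
  have key: "c < (1 - \<theta>) ^ N" using binom_gt2[OF assms] by (simp add: c_def)
  have eps_def': "eps_c N \<theta> = Inf (ereal ` S)" by (simp add: eps_c_def S_def)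
  have fin: "eps_c N \<theta> = ereal e0" if mem: "e0 \<in> S" and low: "\<And>\<epsilon>. \<epsilon> \<in> S \<Longrightarrow> e0 \<le> \<epsilon>"
    unfolding eps_def' by (rule cInf_eq_minimum) (use mem low in auto)
  have iff2: "\<theta> > root N 2 - 1 \<longleftrightarrow> c < 0"
  proof -
    have "root N ((1 + \<theta>) ^ N) = 1 + \<theta>"
      using assms by (intro real_root_pos_unique) auto
    then have "\<theta> > root N 2 - 1 \<longleftrightarrow> root N 2 < root N ((1 + \<theta>) ^ N)" by linarith
    also have "\<dots> \<longleftrightarrow> 2 < (1 + \<theta>) ^ N" using N0 by (rule real_root_less_iff)
    finally show ?thesis by (simp add: c_def)
  qed
  show ?thesis
  proof (cases "even N")
    case ev: True
    show ?thesis
    proof (cases "c < 0")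
      case True
      have "S = {}"
      proof -
        { fix \<epsilon> assume "\<epsilon> \<in> S"
          then have "(1 - \<theta> * (1 + \<epsilon>)) ^ N \<le> c" using eqS by blast
          moreover have "(1 - \<theta> * (1 + \<epsilon>)) ^ N \<ge> 0" using ev by (simp add: zero_le_even_power)
          ultimately have False using True by simp }
        then show ?thesis by blast
      qed
      then show ?thesis using iff2 True ev eps_def' by (simp add: top_ereal_def)
    next
      case False
      then have c0: "c \<ge> 0" by simp
      have r0: "r \<ge> 0" using c0 by (simp add: r_def real_root_ge_zero)
      have rN: "r ^ N = c" using N0 c0 by (simp add: r_def real_root_pow_pos2)
      have th1: "\<theta> < 1"
      proof (rule ccontr)
        assume "\<not> \<theta> < 1"
        then have "(2::real) ^ N \<le> (1 + \<theta>) ^ N" by (intro power_mono) auto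
        moreover have "(2::real) ^ 2 \<le> 2 ^ N" using assms(1) by (intro power_increasing) auto
        ultimately show False using c0 by (simp add: c_def)
      qed
      have "r ^ N < (1 - \<theta>) ^ N" using rN key by simp
      then have rlt: "r < 1 - \<theta>" using th1 by (meson power_less_imp_less_base diff_ge_0_iff_ge less_imp_le)
      have mem: "e0 \<in> S" using eqS u0 rlt rN by simp
      have low: "e0 \<le> \<epsilon>" if "\<epsilon> \<in> S" for \<epsilon>
      proof -
        let ?u = "1 - \<theta> * (1 + \<epsilon>)"
        have "?u ^ N \<le> c" using that eqS by blast
        then have "\<bar>?u\<bar> ^ N \<le> r ^ N" using ev rN by (simp add: power_even_abs)
        then have "\<bar>?u\<bar> \<le> r" using N0 r0 by (metis Suc_pred power_le_imp_le_base)
        then show ?thesis by (intro ge) auto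
      qed
      show ?thesis using fin[OF mem low] iff2 False by (simp add: e0_def r_def c_def)
    qed
  next
    case od: False
    have rN: "r ^ N = c" using od by (simp add: r_def odd_real_root_pow)
    have rt: "root N (u ^ N) = u" for u using od by (intro odd_real_root_unique) auto
    have "root N c < root N ((1 - \<theta>) ^ N)" using key N0 by (simp add: real_root_less_iff)
    then have rlt: "r < 1 - \<theta>" using rt by (simp add: r_def)
    have mem: "e0 \<in> S" using eqS u0 rlt rN by simp
    have low: "e0 \<le> \<epsilon>" if "\<epsilon> \<in> S" for \<epsilon>
    proof -
      let ?u = "1 - \<theta> * (1 + \<epsilon>)"
      have "?u ^ N \<le> c" using that eqS by blast
      then have "root N (?u ^ N) \<le> root N c" using N0 by (simp add: real_root_le_iff)
      then have "?u \<le> r" using rt by (simp add: r_def)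
      then show ?thesis by (intro ge)
    qed
    show ?thesis using fin[OF mem low] od by (simp add: e0_def r_def c_def)
  qed
qed

end
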